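(* Let $D\in\mathbb{N}$, let $G=(V,E)$ be a finite $D$-Ricci-flat graph, and let $\psi\in C^1((0,\infty))$ be concave with $C_\psi>0$. Then $G$ satisfies the $CD\psi(d,0)$ inequality with $d=D/C_\psi$.
   Context: A finite graph $G=(V,E)$: finite set $V$, irreflexive symmetric relation $E$; $v\sim w$ iff $(v,w)\in E$; $N(v):=\{v\}\cup\{w:w\sim v\}$. $G$ is $D$-Ricci-flat if for every $v\in V$: every $w\in N(v)$ has degree $D$ and there are maps $\eta_1,\dots,\eta_D:N(v)\to V$ with, for all $w\in N(v)$ and $i\neq j$: $\eta_i(w)\sim w$, $\eta_i(w)\neq\eta_j(w)$, and $\bigcup_k\{\eta_k(\eta_i(v))\}=\bigcup_k\{\eta_i(\eta_k(v))\}$. Laplacian $\Delta f(v)=\sum_{w\sim v}(f(w)-f(v))$. For positive $f$: $(\Delta^\psi f)(v):=\Delta\big[\psi\big(\tfrac{f}{f(v)}\big)\big](v)$; $(\Omega^\psi f)(v):=\Delta\Big[\psi'\big(\tfrac{f}{f(v)}\big)\cdot\tfrac{f}{f(v)}\cdot\big(\tfrac{\Delta f}{f}-\tfrac{(\Delta f)(v)}{f(v)}\big)\Big](v)$; $2\Gamma_2^\psi(f):=\Omega^\psi f+\frac{\Delta f\,\Delta^\psi f}{f}-\frac{\Delta(f\,\Delta^\psi f)}{f}$. $CD\psi(d,0)$: $\Gamma_2^\psi(f)\ge\frac1d(\Delta^\psi f)^2$ for all positive $f$. For $x,y>0$, $\widetilde{\psi}(x,y):=[\psi'(x)+\psi'(y)](1-xy)+x[\psi(y)-\psi(1/x)]+y[\psi(x)-\psi(1/y)]$,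 and $C_\psi:=\inf\frac{\widetilde{\psi}(x,y)}{(\psi(x)+\psi(y)-2\psi(1))^2}$, the infimum over all $x,y>0$ with $\psi(x)+\psi(y)\neq2\psi(1)$. *)

theory Defs
  imports "HOL-Analysis.Analysis"
begin

definition fin_graph :: "'a set \<Rightarrow> ('a \<Rightarrow> 'a \<Rightarrow> bool) \<Rightarrow> bool" where
  "fin_graph V E \<longleftrightarrow> finite V \<and> (\<forall>v w. E v w \<longrightarrow> v \<in> V \<and> w \<in> V)
     \<and> (\<forall>v w. E v w \<longrightarrow> E w v) \<and> (\<forall>v. \<not> E v v)"

definition nbhd :: "('a \<Rightarrow> 'a \<Rightarrow> bool) \<Rightarrow> 'a \<Rightarrow> 'a set" where
  "nbhd E v = {v} \<union> {w. E w v}"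

definition degree :: "('a \<Rightarrow> 'a \<Rightarrow> bool) \<Rightarrow> 'a \<Rightarrow> nat" where
  "degree E v = card {w. E v w}"

definition ricci_flat :: "nat \<Rightarrow> 'a set \<Rightarrow> ('a \<Rightarrow> 'a \<Rightarrow> bool) \<Rightarrow> bool" where
  "ricci_flat D V E \<longleftrightarrow> (\<forall>v\<in>V.
      (\<forall>w\<in>nbhd E v. degree E w = D) \<and>
      (\<exists>\<eta> :: nat \<Rightarrow> 'a \<Rightarrow> 'a.
         (\<forall>w\<in>nbhd E v. \<forall>i\<in>{1..D}. E (\<eta> i w) w \<and> (\<forall>j\<in>{1..D}. i \<noteq> j \<longrightarrow> \<eta> i w \<noteq> \<eta> j w)) \<and>
         (\<forall>i\<in>{1..D}. (\<Union>k\<in>{1..D}. {\<eta> k (\<eta> i v)}) = (\<Union>k\<in>{1..D}. {\<eta> i (\<eta> k v)}))))"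

definition laplacian :: "('a \<Rightarrow> 'a \<Rightarrow> bool) \<Rightarrow> ('a \<Rightarrow> real) \<Rightarrow> 'a \<Rightarrow> real" where
  "laplacian E f v = (\<Sum>w\<in>{w. E v w}. f w - f v)"

definition lap_psi :: "('a \<Rightarrow> 'a \<Rightarrow> bool) \<Rightarrow> (real \<Rightarrow> real) \<Rightarrow> ('a \<Rightarrow> real) \<Rightarrow> 'a \<Rightarrow> real" where
  "lap_psi E \<psi> f v = laplacian E (\<lambda>w. \<psi> (f w / f v)) v"

definition omega_psi :: "('a \<Rightarrow> 'a \<Rightarrow> bool) \<Rightarrow> (real \<Rightarrow> real) \<Rightarrow> ('a \<Rightarrow> real) \<Rightarrow> 'a \<Rightarrow> real" where
  "omega_psi E \<psi> f v = laplacian E (\<lambda>w. deriv \<psi> (f w / f v) * (f w / f v) *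
        (laplacian E f w / f w - laplacian E f v / f v)) v"

text \<open>\<open>Gamma2_psi\<close> is \<open>\<Gamma>\<^sub>2\<^sup>\<psi>\<close>, i.e. one half of \<open>2\<Gamma>\<^sub>2\<^sup>\<psi>\<close>.\<close>
definition Gamma2_psi :: "('a \<Rightarrow> 'a \<Rightarrow> bool) \<Rightarrow> (real \<Rightarrow> real) \<Rightarrow> ('a \<Rightarrow> real) \<Rightarrow> 'a \<Rightarrow> real" where
  "Gamma2_psi E \<psi> f v = (omega_psi E \<psi> f v
      + laplacian E f v * lap_psi E \<psi> f v / f v
      - laplacian E (\<lambda>w. f w * lap_psi E \<psi> f w) v / f v) / 2"

definition CD_psi :: "'a set \<Rightarrow> ('a \<Rightarrow> 'a \<Rightarrow> bool) \<Rightarrow> (real \<Rightarrow> real) \<Rightarrow> real \<Rightarrow> bool" where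
  "CD_psi V E \<psi> d \<longleftrightarrow> (\<forall>f :: 'a \<Rightarrow> real. (\<forall>v\<in>V. f v > 0) \<longrightarrow>
      (\<forall>v\<in>V. Gamma2_psi E \<psi> f v \<ge> (1 / d) * (lap_psi E \<psi> f v)\<^sup>2))"

definition psi_tilde :: "(real \<Rightarrow> real) \<Rightarrow> real \<Rightarrow> real \<Rightarrow> real" where
  "psi_tilde \<psi> x y = (deriv \<psi> x + deriv \<psi> y) * (1 - x * y)
      + x * (\<psi> y - \<psi> (1 / x)) + y * (\<psi> x - \<psi> (1 / y))"

text \<open>\<open>C_psi\<close> as an extended real infimum (may be \<open>-\<infinity>\<close>, or \<open>\<infinity>\<close> if the index set is empty).\<close>
definition C_psi :: "(real \<Rightarrow> real) \<Rightarrow> ereal" where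
  "C_psi \<psi> = (INF (x, y) \<in> {(x, y). x > 0 \<and> y > 0 \<and> \<psi> x + \<psi> y \<noteq> 2 * \<psi> 1}.
      ereal (psi_tilde \<psi> x y / (\<psi> x + \<psi> y - 2 * \<psi> 1)\<^sup>2))"

definition C1_pos :: "(real \<Rightarrow> real) \<Rightarrow> bool" where
  "C1_pos \<psi> \<longleftrightarrow> (\<forall>x>0. \<psi> differentiable (at x)) \<and> continuous_on {0<..} (deriv \<psi>)"

end

theory Submission
  imports Defs
begin


lemma tangent_le:
  assumes C1: "C1_pos \<psi>" and cc: "concave_on {0<..} \<psi>" and s: "s > 0" and t: "t > 0"
  shows "\<psi> t \<le> \<psi> s + deriv \<psi> s * (t - s)"
proof -
  have cv: "convex_on {0<..} (\<lambda>x. - \<psi> x)" using cc by (simp add: concave_on_def)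
  have "\<psi> differentiable (at s)" using C1 s by (simp add: C1_pos_def)
  hence "(\<psi> has_real_derivative deriv \<psi> s) (at s)"
    using DERIV_deriv_iff_real_differentiable by blast
  hence d: "((\<lambda>x. - \<psi> x) has_field_derivative - deriv \<psi> s) (at s within {0<..})"
    by (rule has_field_derivative_at_within[OF DERIV_minus])
  have "(- \<psi> t) - (- \<psi> s) \<ge> (- deriv \<psi> s) * (t - s)"
  proof (rule convex_on_imp_above_tangent[OF cv _ _ _ d])
    show "connected {0::real<..}" by (rule convex_connected) simp
    have "interior {0::real<..} = {0<..}" by (rule interior_open) simp
    thus "s \<in> interior {0<..}" using s by simp
    show "t \<in> {0<..}" using t by simp
  qed
  thus ?thesis by (simp add: algebra_simps)
qed

lemma psi_tilde_nonneg:
  assumes tan: "\<And>s t. s > 0 \<Longrightarrow> t > 0 \<Longrightarrow> \<psi> t \<le> \<psi> s + deriv \<psi> s * (t - s)"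
    and x: "x > 0" and y: "y > 0"
  shows "psi_tilde \<psi> x y \<ge> 0"
proof -
  have 1: "x * \<psi> (1/x) \<le> x * (\<psi> y + deriv \<psi> y * (1/x - y))"
    using tan[OF y, of "1/x"] x by (intro mult_left_mono) auto
  have 2: "y * \<psi> (1/y) \<le> y * (\<psi> x + deriv \<psi> x * (1/y - x))"
    using tan[OF x, of "1/y"] y by (intro mult_left_mono) auto
  have e1: "x * (\<psi> y + deriv \<psi> y * (1/x - y)) = x * \<psi> y + deriv \<psi> y * (1 - x*y)"
    using x by (simp add: field_simps)
  have e2: "y * (\<psi> x + deriv \<psi> x * (1/y - x)) = y * \<psi> x + deriv \<psi> x * (1 - x*y)"
    using y by (simp add: field_simps)
  have "psi_tilde \<psi> x y = (deriv \<psi> x + deriv \<psi> y) * (1 - x * y)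
      + x * \<psi> y - x * \<psi> (1 / x) + y * \<psi> x - y * \<psi> (1 / y)"
    unfolding psi_tilde_def by (simp add: algebra_simps)
  thus ?thesis using 1 2 e1 e2 by (simp add: algebra_simps)
qed

lemma psi_tilde_ge:
  assumes tan: "\<And>s t. s > 0 \<Longrightarrow> t > 0 \<Longrightarrow> \<psi> t \<le> \<psi> s + deriv \<psi> s * (t - s)"
    and Cpos: "C_psi \<psi> > 0" and x: "x > 0" and y: "y > 0"
  shows "psi_tilde \<psi> x y \<ge> real_of_ereal (C_psi \<psi>) * (\<psi> x + \<psi> y - 2 * \<psi> 1)\<^sup>2"
proof (cases "\<psi> x + \<psi> y = 2 * \<psi> 1")
  case True
  then show ?thesis using psi_tilde_nonneg[OF tan x y] by simp
next
  case False
  let ?q = "psi_tilde \<psi> x y / (\<psi> x + \<psi> y - 2 * \<psi> 1)\<^sup>2"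
  have mem: "(x, y) \<in> {(x, y). x > 0 \<and> y > 0 \<and> \<psi> x + \<psi> y \<noteq> 2 * \<psi> 1}" using x y False by simp
  have le: "C_psi \<psi> \<le> ereal ?q"
    unfolding C_psi_def by (rule INF_lower2[OF mem]) simp
  then obtain c where c: "C_psi \<psi> = ereal c" using Cpos by (cases "C_psi \<psi>") auto
  with le have cq: "c \<le> ?q" by simp
  have pos: "(\<psi> x + \<psi> y - 2 * \<psi> 1)\<^sup>2 > 0" using False by simp
  have "c * (\<psi> x + \<psi> y - 2 * \<psi> 1)\<^sup>2 \<le> psi_tilde \<psi> x y"
    using cq pos by (simp add: le_divide_eq)
  thus ?thesis using c by simp
qed



lemma aux_cs: "(c::real) * sum g I - sum h I = (\<Sum>i\<in>I. c * g i - h i)"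
  by (simp add: sum_distrib_left sum_subtractf)

lemma dsum3: "(\<Sum>k\<in>I. \<Sum>i\<in>I. ((F k i - G k i) / 2 + H k i)) =
   ((\<Sum>k\<in>I. \<Sum>i\<in>I. F k i) - (\<Sum>k\<in>I. \<Sum>i\<in>I. G k i)) / 2 + (\<Sum>k\<in>I. \<Sum>i\<in>I. (H k i::real))"
  by (simp add: sum.distrib sum_subtractf flip: sum_divide_distrib)

lemma dsum2: "(\<Sum>k\<in>I. \<Sum>i\<in>I. ((F k i - G k i) / 2)) =
   ((\<Sum>k\<in>I. \<Sum>i\<in>I. F k i) - (\<Sum>k\<in>I. \<Sum>i\<in>I. (G k i::real))) / 2"
  by (simp add: sum.distrib sum_subtractf flip: sum_divide_distrib)

lemma core:
  fixes x :: "nat \<Rightarrow> real" and w :: "nat \<Rightarrow> nat \<Rightarrow> real" and \<tau> :: "nat \<Rightarrow> nat"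
  assumes fin: "finite I" and cardI: "card I = D"
    and xpos: "\<And>i. i \<in> I \<Longrightarrow> x i > 0"
    and tauI: "\<And>i. i \<in> I \<Longrightarrow> \<tau> i \<in> I" and tau1: "\<And>i. i \<in> I \<Longrightarrow> w i (\<tau> i) = 1"
    and tauinj: "inj_on \<tau> I"
    and tan: "\<And>s t. s > 0 \<Longrightarrow> t > 0 \<Longrightarrow> \<psi> t \<le> \<psi> s + deriv \<psi> s * (t - s)"
    and til: "\<And>s t. s > 0 \<Longrightarrow> t > 0 \<Longrightarrow> psi_tilde \<psi> s t \<ge> c * (\<psi> s + \<psi> t - 2 * \<psi> 1)\<^sup>2"
    and c0: "c \<ge> 0"
    and wpos: "\<And>i k. i \<in> I \<Longrightarrow> k \<in> I \<Longrightarrow> w i k > 0"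
  assumes L_def: "L = (\<Sum>i\<in>I. x i - 1)"
    and LP_def: "LP = (\<Sum>i\<in>I. \<psi> (x i) - \<psi> 1)"
    and Om1_def: "Om1 = (\<Sum>k\<in>I. deriv \<psi> (x k) * x k * ((\<Sum>i\<in>I. (w i k - x k) / x k) - L))"
    and Om2_def: "Om2 = (\<Sum>k\<in>I. deriv \<psi> (x k) * x k * ((\<Sum>j\<in>I. (w k j - x k) / x k) - L))"
    and C1_def: "C1 = (\<Sum>k\<in>I. x k * (\<Sum>i\<in>I. \<psi> (w i k / x k) - \<psi> 1) - LP)"
    and C2_def: "C2 = (\<Sum>k\<in>I. x k * (\<Sum>j\<in>I. \<psi> (w k j / x k) - \<psi> 1) - LP)"
  shows "((Om1 + Om2) / 2 + L * LP - (C1 + C2) / 2) / 2 \<ge> c / D * LP\<^sup>2"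
proof -
  define p where "p i = deriv \<psi> (x i)" for i
  define a where "a i = \<psi> (x i) - \<psi> 1" for i
  define Q where "Q i k = ((p k * w i k - p k * x k * x i) - (x k * (\<psi> (w i k / x k) - \<psi> 1) - a i)) / 2
     + ((p i * w i k - p i * x i * x k) - (x i * (\<psi> (w i k / x i) - \<psi> 1) - a k)) / 2
     + (x k - 1) * a i" for i k
  define Z where "Z i k = (x k * \<psi> (x i) - x i * \<psi> (x k)) / 2 + \<psi> 1 * (x i - x k) / 2 + (\<psi> (x k) - \<psi> (x i)) / 2" for i k
  have Om1: "Om1 = (\<Sum>k\<in>I. \<Sum>i\<in>I. p k * w i k - p k * x k * x i)"
    unfolding Om1_def p_def[symmetric]
  proof (rule sum.cong[OF refl])
    fix k assume k: "k \<in> I"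
    have "p k * x k * ((\<Sum>i\<in>I. (w i k - x k) / x k) - L) = (\<Sum>i\<in>I. p k * x k * ((w i k - x k) / x k - (x i - 1)))"
      unfolding L_def by (simp add: sum_distrib_left sum_subtractf right_diff_distrib)
    also have "\<dots> = (\<Sum>i\<in>I. p k * w i k - p k * x k * x i)"
      using xpos[OF k] by (intro sum.cong) (auto simp: field_simps)
    finally show "p k * x k * ((\<Sum>i\<in>I. (w i k - x k) / x k) - L) = (\<Sum>i\<in>I. p k * w i k - p k * x k * x i)" .
  qed
  have Om2: "Om2 = (\<Sum>k\<in>I. \<Sum>i\<in>I. p k * w k i - p k * x k * x i)"
    unfolding Om2_def p_def[symmetric]
  proof (rule sum.cong[OF refl])
    fix k assume k: "k \<in> I"
    have "p k * x k * ((\<Sum>i\<in>I. (w k i - x k) / x k) - L) = (\<Sum>i\<in>I. p k * x k * ((w k i - x k) / x k - (x i - 1)))"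
      unfolding L_def by (simp add: sum_distrib_left sum_subtractf right_diff_distrib)
    also have "\<dots> = (\<Sum>i\<in>I. p k * w k i - p k * x k * x i)"
      using xpos[OF k] by (intro sum.cong) (auto simp: field_simps)
    finally show "p k * x k * ((\<Sum>i\<in>I. (w k i - x k) / x k) - L) = (\<Sum>i\<in>I. p k * w k i - p k * x k * x i)" .
  qed
  have C1: "C1 = (\<Sum>k\<in>I. \<Sum>i\<in>I. x k * (\<psi> (w i k / x k) - \<psi> 1) - a i)"
  proof -
    have LPa: "LP = sum a I" unfolding LP_def a_def by simp
    show ?thesis unfolding C1_def LPa by (rule sum.cong[OF refl], rule aux_cs)
  qed
  have C2: "C2 = (\<Sum>k\<in>I. \<Sum>i\<in>I. x k * (\<psi> (w k i / x k) - \<psi> 1) - a i)"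
  proof -
    have LPa: "LP = sum a I" unfolding LP_def a_def by simp
    show ?thesis unfolding C2_def LPa by (rule sum.cong[OF refl], rule aux_cs)
  qed
  have LLP: "L * LP = (\<Sum>k\<in>I. \<Sum>i\<in>I. (x k - 1) * a i)"
  proof -
    have "L * LP = (\<Sum>k\<in>I. x k - 1) * (\<Sum>i\<in>I. a i)" unfolding L_def LP_def a_def by simp
    also have "\<dots> = (\<Sum>k\<in>I. \<Sum>i\<in>I. (x k - 1) * a i)" by (rule sum_product)
    finally show ?thesis .
  qed
  have G: "(Om1 + Om2) / 2 + L * LP - (C1 + C2) / 2 = (\<Sum>i\<in>I. \<Sum>k\<in>I. Q i k)"
  proof -
    have "(Om1 + Om2) / 2 + L * LP - (C1 + C2) / 2 =
      (\<Sum>k\<in>I. \<Sum>i\<in>I. ((p k * w i k - p k * x k * x i) - (x k * (\<psi> (w i k / x k) - \<psi> 1) - a i)) / 2 + (x k - 1) * a i)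
      + (\<Sum>k\<in>I. \<Sum>i\<in>I. ((p k * w k i - p k * x k * x i) - (x k * (\<psi> (w k i / x k) - \<psi> 1) - a i)) / 2)"
      unfolding Om1 Om2 C1 C2 LLP dsum3 dsum2 by argo
    also have "\<dots> = (\<Sum>i\<in>I. \<Sum>k\<in>I. ((p k * w i k - p k * x k * x i) - (x k * (\<psi> (w i k / x k) - \<psi> 1) - a i)) / 2 + (x k - 1) * a i)
      + (\<Sum>i\<in>I. \<Sum>k\<in>I. ((p i * w i k - p i * x i * x k) - (x i * (\<psi> (w i k / x i) - \<psi> 1) - a k)) / 2)"
      by (rule arg_cong2[where f="(+)"], rule sum.swap, rule refl)
    also have "\<dots> = (\<Sum>i\<in>I. \<Sum>k\<in>I. Q i k)"
      unfolding Q_def by (simp add: sum.distrib)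
    finally show ?thesis .
  qed
  have QZ: "Q i k \<ge> Z i k" if i: "i \<in> I" and k: "k \<in> I" for i k
  proof -
    have xi: "x i > 0" and xk: "x k > 0" and wp: "w i k > 0" using xpos i k wpos by auto
    have t1: "x k * \<psi> (w i k / x k) \<le> x k * \<psi> (x i) + p i * (w i k - x i * x k)"
    proof -
      have "x k * \<psi> (w i k / x k) \<le> x k * (\<psi> (x i) + p i * (w i k / x k - x i))"
        unfolding p_def using tan[OF xi, of "w i k / x k"] xk wp by (intro mult_left_mono) auto
      also have "\<dots> = x k * \<psi> (x i) + p i * (w i k - x i * x k)" using xk by (simp add: field_simps)
      finally show ?thesis .
    qed
    have t2: "x i * \<psi> (w i k / x i) \<le> x i * \<psi> (x k) + p k * (w i k - x i * x k)"
    proof -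
      have "x i * \<psi> (w i k / x i) \<le> x i * (\<psi> (x k) + p k * (w i k / x i - x k))"
        unfolding p_def using tan[OF xk, of "w i k / x i"] xi wp by (intro mult_left_mono) auto
      also have "\<dots> = x i * \<psi> (x k) + p k * (w i k - x i * x k)" using xi by (simp add: field_simps)
      finally show ?thesis .
    qed
    show ?thesis using t1 t2 unfolding Q_def Z_def a_def by (simp add: algebra_simps) argo
  qed
  have QZt: "Q i (\<tau> i) = Z i (\<tau> i) + psi_tilde \<psi> (x i) (x (\<tau> i)) / 2" if i: "i \<in> I" for i
    unfolding Q_def Z_def a_def psi_tilde_def p_def using tau1[OF i]
    by (simp add: algebra_simps) argo
  have Zsum: "(\<Sum>i\<in>I. \<Sum>k\<in>I. Z i k) = 0"
  proof -
    have "(\<Sum>i\<in>I. \<Sum>k\<in>I. Z i k) = (\<Sum>k\<in>I. \<Sum>i\<in>I. Z i k)" by (rule sum.swap)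
    also have "\<dots> = (\<Sum>k\<in>I. \<Sum>i\<in>I. - Z k i)"
      by (intro sum.cong refl) (simp add: Z_def field_simps)
    also have "\<dots> = - (\<Sum>k\<in>I. \<Sum>i\<in>I. Z k i)"
      by (simp add: sum_negf)
    finally show ?thesis by simp
  qed
  have rowge: "(\<Sum>k\<in>I. Q i k) \<ge> (\<Sum>k\<in>I. Z i k) + psi_tilde \<psi> (x i) (x (\<tau> i)) / 2" if i: "i \<in> I" for i
  proof -
    have ti: "\<tau> i \<in> I" using tauI[OF i] .
    have "(\<Sum>k\<in>I. Q i k) = Q i (\<tau> i) + (\<Sum>k\<in>I - {\<tau> i}. Q i k)" using sum.remove[OF fin ti] .
    also have "\<dots> \<ge> Z i (\<tau> i) + psi_tilde \<psi> (x i) (x (\<tau> i)) / 2 + (\<Sum>k\<in>I - {\<tau> i}. Z i k)"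
      using QZt[OF i] QZ[OF i] by (auto intro!: sum_mono add_mono)
    moreover have "(\<Sum>k\<in>I. Z i k) = Z i (\<tau> i) + (\<Sum>k\<in>I - {\<tau> i}. Z i k)" using sum.remove[OF fin ti] .
    ultimately show ?thesis by linarith
  qed
  have main1: "(\<Sum>i\<in>I. \<Sum>k\<in>I. Q i k) \<ge> (\<Sum>i\<in>I. psi_tilde \<psi> (x i) (x (\<tau> i))) / 2"
  proof -
    have "(\<Sum>i\<in>I. \<Sum>k\<in>I. Q i k) \<ge> (\<Sum>i\<in>I. (\<Sum>k\<in>I. Z i k) + psi_tilde \<psi> (x i) (x (\<tau> i)) / 2)"
      using rowge by (rule sum_mono)
    thus ?thesis using Zsum by (simp add: sum.distrib sum_divide_distrib)
  qed
  have main2: "(\<Sum>i\<in>I. psi_tilde \<psi> (x i) (x (\<tau> i))) \<ge> c * (\<Sum>i\<in>I. (a i + a (\<tau> i))\<^sup>2)"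
  proof -
    have "(\<Sum>i\<in>I. psi_tilde \<psi> (x i) (x (\<tau> i))) \<ge> (\<Sum>i\<in>I. c * (a i + a (\<tau> i))\<^sup>2)"
    proof (rule sum_mono)
      fix i assume i: "i \<in> I"
      have "a i + a (\<tau> i) = \<psi> (x i) + \<psi> (x (\<tau> i)) - 2 * \<psi> 1" unfolding a_def by simp
      thus "c * (a i + a (\<tau> i))\<^sup>2 \<le> psi_tilde \<psi> (x i) (x (\<tau> i))"
        using til[OF xpos[OF i] xpos[OF tauI[OF i]]] by simp
    qed
    thus ?thesis by (simp add: sum_distrib_left)
  qed
  have tauim: "\<tau> ` I = I" using endo_inj_surj[OF fin _ tauinj] tauI by auto
  have suma: "(\<Sum>i\<in>I. a i + a (\<tau> i)) = 2 * LP"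
  proof -
    have "(\<Sum>i\<in>I. a (\<tau> i)) = (\<Sum>i\<in>I. a i)"
      using sum.reindex[OF tauinj, of a] tauim by simp
    moreover have "(\<Sum>i\<in>I. a i + a (\<tau> i)) = (\<Sum>i\<in>I. a i) + (\<Sum>i\<in>I. a (\<tau> i))" by (rule sum.distrib)
    moreover have "LP = sum a I" unfolding LP_def a_def by simp
    ultimately show ?thesis by simp
  qed
  have CS: "(2 * LP)\<^sup>2 \<le> (\<Sum>i\<in>I. (a i + a (\<tau> i))\<^sup>2) * D"
    using sum_squared_le_sum_of_squares[of "\<lambda>i. a i + a (\<tau> i)" I] suma cardI by simp
  have sqnn: "(\<Sum>i\<in>I. (a i + a (\<tau> i))\<^sup>2) \<ge> 0" by (intro sum_nonneg) auto
  have fin2: "c / D * LP\<^sup>2 \<le> c * (\<Sum>i\<in>I. (a i + a (\<tau> i))\<^sup>2) / 4"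
  proof (cases "D = 0")
    case True thus ?thesis using c0 sqnn by simp
  next
    case False
    hence Dp: "real D > 0" by simp
    have "c * (4 * LP\<^sup>2) \<le> c * ((\<Sum>i\<in>I. (a i + a (\<tau> i))\<^sup>2) * D)"
      using CS c0 by (intro mult_left_mono) (auto simp: power_mult_distrib)
    thus ?thesis using Dp by (simp add: field_simps)
  qed
  have m2: "c * (\<Sum>i\<in>I. (a i + a (\<tau> i))\<^sup>2) / 4 \<le> (\<Sum>i\<in>I. psi_tilde \<psi> (x i) (x (\<tau> i))) / 4"
    using main2 by simp
  have m1: "(\<Sum>i\<in>I. psi_tilde \<psi> (x i) (x (\<tau> i))) / 4 \<le> ((Om1 + Om2) / 2 + L * LP - (C1 + C2) / 2) / 2"
    using main1 G by simp
  show ?thesis using fin2 m1 m2 by linarith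
qed



theorem mainTheorem13:
  fixes D :: nat and V :: "'a set" and E :: "'a \<Rightarrow> 'a \<Rightarrow> bool" and \<psi> :: "real \<Rightarrow> real"
  assumes "fin_graph V E"
    and "ricci_flat D V E"
    and "C1_pos \<psi>"
    and "concave_on {0<..} \<psi>"
    and "C_psi \<psi> > 0"
  shows "CD_psi V E \<psi> (real D / real_of_ereal (C_psi \<psi>))"
  unfolding CD_psi_def
proof (intro allI impI ballI)
  note G = assms(1)[unfolded fin_graph_def]
  have finV: "finite V" and inV: "\<And>a b. E a b \<Longrightarrow> a \<in> V \<and> b \<in> V"
    and sym: "\<And>a b. E a b \<Longrightarrow> E b a" using G by blast+
  have tan: "\<And>s t. s > 0 \<Longrightarrow> t > 0 \<Longrightarrow> \<psi> t \<le> \<psi> s + deriv \<psi> s * (t - s)"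
    using tangent_le[OF assms(3) assms(4)] by blast
  define c where "c = real_of_ereal (C_psi \<psi>)"
  have c0: "c \<ge> 0" unfolding c_def using assms(5) by (simp add: real_of_ereal_pos)
  have til: "\<And>s t. s > 0 \<Longrightarrow> t > 0 \<Longrightarrow> psi_tilde \<psi> s t \<ge> c * (\<psi> s + \<psi> t - 2 * \<psi> 1)\<^sup>2"
    unfolding c_def using psi_tilde_ge[OF tan assms(5)] by blast
  fix f :: "'a \<Rightarrow> real" and v
  assume fpos: "\<forall>v\<in>V. f v > 0" and v: "v \<in> V"
  define I where "I = {1..D}"
  define N where "N u = {w. E u w}" for u
  have finI: "finite I" and cardI: "card I = D" unfolding I_def by auto
  have finN: "finite (N u)" for u
    by (rule finite_subset[OF _ finV]) (auto simp: N_def dest: inV)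
  have rf: "(\<forall>w\<in>nbhd E v. degree E w = D) \<and>
      (\<exists>\<eta> :: nat \<Rightarrow> 'a \<Rightarrow> 'a.
         (\<forall>w\<in>nbhd E v. \<forall>i\<in>{1..D}. E (\<eta> i w) w \<and> (\<forall>j\<in>{1..D}. i \<noteq> j \<longrightarrow> \<eta> i w \<noteq> \<eta> j w)) \<and>
         (\<forall>i\<in>{1..D}. (\<Union>k\<in>{1..D}. {\<eta> k (\<eta> i v)}) = (\<Union>k\<in>{1..D}. {\<eta> i (\<eta> k v)})))"
    by (rule bspec[OF assms(2)[unfolded ricci_flat_def] v])
  have degD: "\<forall>w\<in>nbhd E v. degree E w = D" using rf by (rule conjunct1)
  obtain \<eta> :: "nat \<Rightarrow> 'a \<Rightarrow> 'a" where
    A1: "\<forall>w\<in>nbhd E v. \<forall>i\<in>{1..D}. E (\<eta> i w) w \<and> (\<forall>j\<in>{1..D}. i \<noteq> j \<longrightarrow> \<eta> i w \<noteq> \<eta> j w)"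
    and A2: "\<forall>i\<in>{1..D}. (\<Union>k\<in>{1..D}. {\<eta> k (\<eta> i v)}) = (\<Union>k\<in>{1..D}. {\<eta> i (\<eta> k v)})"
    using conjunct2[OF rf] by (elim exE conjE)
  have H1: "\<And>u i. u \<in> nbhd E v \<Longrightarrow> i \<in> I \<Longrightarrow> E (\<eta> i u) u"
    using A1 unfolding I_def by blast
  have H1d: "\<And>u i j. u \<in> nbhd E v \<Longrightarrow> i \<in> I \<Longrightarrow> j \<in> I \<Longrightarrow> i \<noteq> j \<Longrightarrow> \<eta> i u \<noteq> \<eta> j u"
    using A1 unfolding I_def by blast
  have H2: "\<And>i. i \<in> I \<Longrightarrow> (\<Union>k\<in>I. {\<eta> k (\<eta> i v)}) = (\<Union>k\<in>I. {\<eta> i (\<eta> k v)})"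
    using A2 unfolding I_def by (rule bspec)
  define y where "y k = \<eta> k v" for k
  have vnb: "v \<in> nbhd E v" by (simp add: nbhd_def)
  have ynb: "y k \<in> nbhd E v" if "k \<in> I" for k
    using H1[OF vnb that] by (simp add: nbhd_def y_def)
  have bij: "bij_betw (\<lambda>i. \<eta> i u) I (N u)" if u: "u \<in> nbhd E v" for u
  proof -
    have inj: "inj_on (\<lambda>i. \<eta> i u) I" using H1d[OF u] by (auto simp: inj_on_def)
    have sub: "(\<lambda>i. \<eta> i u) ` I \<subseteq> N u" using H1[OF u] sym by (auto simp: N_def)
    have "card (N u) = D" using degD u by (simp add: degree_def N_def)
    hence "card ((\<lambda>i. \<eta> i u) ` I) = card (N u)" using card_image[OF inj] cardI by simp
    hence "(\<lambda>i. \<eta> i u) ` I = N u" using card_subset_eq[OF finN sub] by simp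
    thus ?thesis using inj by (simp add: bij_betw_def)
  qed
  have sumN: "sum g (N u) = (\<Sum>i\<in>I. g (\<eta> i u))" if u: "u \<in> nbhd E v" for u and g :: "'a \<Rightarrow> real"
    using sum.reindex_bij_betw[OF bij[OF u], of g] by simp
  have rowbij: "bij_betw (\<lambda>k. \<eta> i (y k)) I (N (y i))" if i: "i \<in> I" for i
  proof -
    have "(\<lambda>k. \<eta> i (y k)) ` I = (\<Union>k\<in>I. {\<eta> i (\<eta> k v)})" by (auto simp: y_def)
    also have "\<dots> = (\<Union>k\<in>I. {\<eta> k (\<eta> i v)})" using H2[OF i] by simp
    also have "\<dots> = (\<lambda>k. \<eta> k (y i)) ` I" by (auto simp: y_def)
    also have "\<dots> = N (y i)" using bij[OF ynb[OF i]] by (simp add: bij_betw_def)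
    finally have im: "(\<lambda>k. \<eta> i (y k)) ` I = N (y i)" .
    have "card (N (y i)) = D" using degD ynb[OF i] by (simp add: degree_def N_def)
    hence "inj_on (\<lambda>k. \<eta> i (y k)) I" using eq_card_imp_inj_on[OF finI, of "\<lambda>k. \<eta> i (y k)"] im cardI by simp
    thus ?thesis using im by (simp add: bij_betw_def)
  qed
  have sumR: "sum g (N (y i)) = (\<Sum>k\<in>I. g (\<eta> i (y k)))" if i: "i \<in> I" for i and g :: "'a \<Rightarrow> real"
    using sum.reindex_bij_betw[OF rowbij[OF i], of g] by simp
  have "\<forall>i\<in>I. \<exists>k\<in>I. \<eta> i (y k) = v"
  proof
    fix i assume i: "i \<in> I"
    have "v \<in> N (y i)" using H1[OF vnb i] by (simp add: N_def y_def)
    hence "v \<in> (\<lambda>k. \<eta> i (y k)) ` I" using rowbij[OF i] by (simp add: bij_betw_def)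
    thus "\<exists>k\<in>I. \<eta> i (y k) = v" by (metis imageE)
  qed
  then obtain \<tau> where tau: "\<And>i. i \<in> I \<Longrightarrow> \<tau> i \<in> I \<and> \<eta> i (y (\<tau> i)) = v" by metis
  have tauinj: "inj_on \<tau> I"
  proof (rule inj_onI)
    fix i j assume i: "i \<in> I" and j: "j \<in> I" and e: "\<tau> i = \<tau> j"
    show "i = j"
    proof (rule ccontr)
      assume "i \<noteq> j"
      hence "\<eta> i (y (\<tau> i)) \<noteq> \<eta> j (y (\<tau> i))" using H1d[OF ynb[OF conjunct1[OF tau[OF i]]] i j] by simp
      thus False using tau[OF i] tau[OF j] e by simp
    qed
  qed
  have yV: "y k \<in> V" if "k \<in> I" for k using inV[OF H1[OF vnb that]] by (simp add: y_def)
  have etaV: "\<eta> i (y k) \<in> V" if "i \<in> I" "k \<in> I" for i k using inV[OF H1[OF ynb[OF that(2)] that(1)]] by simp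
  have fv: "f v > 0" using fpos v by blast
  define x where "x k = f (y k) / f v" for k
  define w where "w i k = f (\<eta> i (y k)) / f v" for i k
  have xpos: "x k > 0" if "k \<in> I" for k using fpos yV[OF that] fv by (simp add: x_def)
  have wpos: "w i k > 0" if "i \<in> I" "k \<in> I" for i k using fpos etaV[OF that] fv by (simp add: w_def)
  have tau1: "w i (\<tau> i) = 1" if "i \<in> I" for i using tau[OF that] fv by (simp add: w_def)
  define L where "L = (\<Sum>i\<in>I. x i - 1)"
  define LP where "LP = (\<Sum>i\<in>I. \<psi> (x i) - \<psi> 1)"
  have lapv: "laplacian E f v / f v = L"
  proof -
    have "laplacian E f v = (\<Sum>i\<in>I. f (y i) - f v)"
      unfolding laplacian_def N_def[symmetric] sumN[OF vnb] y_def ..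
    also have "\<dots> / f v = L" unfolding L_def sum_divide_distrib
      using fv by (intro sum.cong refl) (simp add: x_def field_simps)
    finally show ?thesis .
  qed
  have LPv: "lap_psi E \<psi> f v = LP"
  proof -
    have "lap_psi E \<psi> f v = (\<Sum>i\<in>I. \<psi> (f (y i) / f v) - \<psi> (f v / f v))"
      unfolding lap_psi_def laplacian_def N_def[symmetric] sumN[OF vnb] y_def ..
    also have "\<dots> = LP" unfolding LP_def using fv by (simp add: x_def)
    finally show ?thesis .
  qed
  have LPcol: "lap_psi E \<psi> f (y k) = (\<Sum>i\<in>I. \<psi> (w i k / x k) - \<psi> 1)" if k: "k \<in> I" for k
  proof -
    have "lap_psi E \<psi> f (y k) = (\<Sum>i\<in>I. \<psi> (f (\<eta> i (y k)) / f (y k)) - \<psi> (f (y k) / f (y k)))"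
      unfolding lap_psi_def laplacian_def N_def[symmetric] sumN[OF ynb[OF k]] ..
    also have "\<dots> = (\<Sum>i\<in>I. \<psi> (w i k / x k) - \<psi> 1)"
      using fv xpos[OF k] bspec[OF fpos yV[OF k]] by (intro sum.cong refl) (simp add: x_def w_def)
    finally show ?thesis .
  qed
  have LProw: "lap_psi E \<psi> f (y k) = (\<Sum>j\<in>I. \<psi> (w k j / x k) - \<psi> 1)" if k: "k \<in> I" for k
  proof -
    have "lap_psi E \<psi> f (y k) = (\<Sum>j\<in>I. \<psi> (f (\<eta> k (y j)) / f (y k)) - \<psi> (f (y k) / f (y k)))"
      unfolding lap_psi_def laplacian_def N_def[symmetric] sumR[OF k] ..
    also have "\<dots> = (\<Sum>j\<in>I. \<psi> (w k j / x k) - \<psi> 1)"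
      using fv xpos[OF k] bspec[OF fpos yV[OF k]] by (intro sum.cong refl) (simp add: x_def w_def)
    finally show ?thesis .
  qed
  have Lcol: "laplacian E f (y k) / f (y k) = (\<Sum>i\<in>I. (w i k - x k) / x k)" if k: "k \<in> I" for k
  proof -
    have "laplacian E f (y k) = (\<Sum>i\<in>I. f (\<eta> i (y k)) - f (y k))"
      unfolding laplacian_def N_def[symmetric] sumN[OF ynb[OF k]] ..
    also have "\<dots> / f (y k) = (\<Sum>i\<in>I. (w i k - x k) / x k)" unfolding sum_divide_distrib
      using fv xpos[OF k] bspec[OF fpos yV[OF k]] by (intro sum.cong refl) (simp add: x_def w_def field_simps)
    finally show ?thesis .
  qed
  have Lrow: "laplacian E f (y k) / f (y k) = (\<Sum>j\<in>I. (w k j - x k) / x k)" if k: "k \<in> I" for k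
  proof -
    have "laplacian E f (y k) = (\<Sum>j\<in>I. f (\<eta> k (y j)) - f (y k))"
      unfolding laplacian_def N_def[symmetric] sumR[OF k] ..
    also have "\<dots> / f (y k) = (\<Sum>j\<in>I. (w k j - x k) / x k)" unfolding sum_divide_distrib
      using fv xpos[OF k] bspec[OF fpos yV[OF k]] by (intro sum.cong refl) (simp add: x_def w_def field_simps)
    finally show ?thesis .
  qed
  define Om where "Om = omega_psi E \<psi> f v"
  have Om0: "Om = (\<Sum>k\<in>I. deriv \<psi> (x k) * x k * (laplacian E f (y k) / f (y k) - L))"
  proof -
    have "Om = (\<Sum>k\<in>I. deriv \<psi> (f (y k) / f v) * (f (y k) / f v) *
        (laplacian E f (y k) / f (y k) - laplacian E f v / f v) -
        deriv \<psi> (f v / f v) * (f v / f v) * (laplacian E f v / f v - laplacian E f v / f v))"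
      unfolding Om_def omega_psi_def laplacian_def[of E "\<lambda>w. deriv \<psi> (f w / f v) * (f w / f v) *
        (laplacian E f w / f w - laplacian E f v / f v)"] N_def[symmetric] sumN[OF vnb] y_def ..
    also have "\<dots> = (\<Sum>k\<in>I. deriv \<psi> (x k) * x k * (laplacian E f (y k) / f (y k) - L))"
      using lapv by (simp add: x_def)
    finally show ?thesis .
  qed
  have Om1: "Om = (\<Sum>k\<in>I. deriv \<psi> (x k) * x k * ((\<Sum>i\<in>I. (w i k - x k) / x k) - L))"
    unfolding Om0 by (intro sum.cong refl) (simp add: Lcol)
  have Om2: "Om = (\<Sum>k\<in>I. deriv \<psi> (x k) * x k * ((\<Sum>j\<in>I. (w k j - x k) / x k) - L))"
    unfolding Om0 by (intro sum.cong refl) (simp add: Lrow)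
  define Cc where "Cc = laplacian E (\<lambda>w. f w * lap_psi E \<psi> f w) v / f v"
  have Cc0: "Cc = (\<Sum>k\<in>I. x k * lap_psi E \<psi> f (y k) - LP)"
  proof -
    have eq: "laplacian E (\<lambda>w. f w * lap_psi E \<psi> f w) v = (\<Sum>k\<in>I. f (y k) * lap_psi E \<psi> f (y k) - f v * lap_psi E \<psi> f v)"
      unfolding laplacian_def N_def[symmetric] sumN[OF vnb] y_def ..
    have "Cc = (\<Sum>k\<in>I. f (y k) * lap_psi E \<psi> f (y k) - f v * LP) / f v"
      unfolding Cc_def eq LPv ..
    also have "\<dots> = (\<Sum>k\<in>I. (f (y k) * lap_psi E \<psi> f (y k) - f v * LP) / f v)"
      by (rule sum_divide_distrib)
    also have "\<dots> = (\<Sum>k\<in>I. x k * lap_psi E \<psi> f (y k) - LP)"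
      using fv by (intro sum.cong refl) (simp add: x_def field_simps)
    finally show ?thesis .
  qed
  have C1: "Cc = (\<Sum>k\<in>I. x k * (\<Sum>i\<in>I. \<psi> (w i k / x k) - \<psi> 1) - LP)"
    unfolding Cc0 by (intro sum.cong refl) (simp add: LPcol)
  have C2: "Cc = (\<Sum>k\<in>I. x k * (\<Sum>j\<in>I. \<psi> (w k j / x k) - \<psi> 1) - LP)"
    unfolding Cc0 by (intro sum.cong refl) (simp add: LProw)
  have core1: "((Om + Om) / 2 + L * LP - (Cc + Cc) / 2) / 2 \<ge> c / D * LP\<^sup>2"
    by (rule core[OF finI cardI xpos _ tau1 tauinj tan til c0 wpos L_def LP_def Om1 Om2 C1 C2])
       (use tau in auto)
  have gam: "Gamma2_psi E \<psi> f v = ((Om + Om) / 2 + L * LP - (Cc + Cc) / 2) / 2"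
    unfolding Gamma2_psi_def Om_def[symmetric] Cc_def[symmetric] LPv
    using lapv[symmetric] fv by (simp add: field_simps)
  have eqr: "1 / (real D / real_of_ereal (C_psi \<psi>)) * (lap_psi E \<psi> f v)\<^sup>2 = c / D * LP\<^sup>2"
    unfolding LPv c_def by simp
  show "1 / (real D / real_of_ereal (C_psi \<psi>)) * (lap_psi E \<psi> f v)\<^sup>2 \<le> Gamma2_psi E \<psi> f v"
    unfolding gam eqr by (rule core1)
qed


end
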